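(* Let $Z\in\mathcal{H}_3$ be the period matrix of a simple genus $3$ hyperelliptic Jacobian such that $\vartheta[\delta](Z)=0$ for exactly one even characteristic class $\delta\in\frac12\mathbb{Z}^6/\mathbb{Z}^6$, and $\delta\neq 0$. Then there is $\gamma\in\Gamma_{1,2}$ such that $Z$ satisfies the Vanishing Criterion for the map $\eta=\gamma\tilde\eta$, i.e. for every $S\subseteq B$ with $\#S$ even, $\vartheta[\eta_S](Z)=0$ if and only if $\#(S\circ U_\eta)\neq 4$. Furthermore, this $\gamma$ can be taken to be any $\gamma\in\Gamma_{1,2}$ such that $\gamma\,(\tfrac12,\tfrac12,\tfrac12,\tfrac12,0,\tfrac12)^T\equiv\delta \pmod{\mathbb{Z}^6}$.
   Context: $\mathcal{H}_g$ is the set of complex symmetric $g\times g$ matrices with positive definite imaginary part. For $x\in\mathbb{C}^{6}$ write $x=(x_1,x_2)$ with $x_1$ the first $3$ and $x_2$ the last $3$ entries. Let $B=\{1,2,\dots,7,\infty\}$, $S_1\circ S_2=(S_1\cup S_2)\setminus(S_1\cap S_2)$, $S^c=B\setminus S$. For $\xi,\zeta\in\frac12\mathbb{Z}^{6}$: $e_*(\xi)=\exp(4\pi i\,\xi_1^T\xi_2)$ and $e_2(\xi,\zeta)=\exp(4\pi i\,\xi^TJ\zeta)$ with $J=\begin{pmatrix}0&\mathbb{1}_3\\-\mathbb{1}_3&0\end{pmatrix}$. $\Xi_3$ is the set of maps $\eta$ from subsets of $B$ to $\frac12\mathbb{Z}^6$ such that: (i) $\eta(\{\infty\})=0$; (ii)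 $\eta(S)=\sum_{i\in S}\eta(\{i\})$; (iii) $\eta(S)\equiv\eta(S^c)$ mod $\mathbb{Z}^6$ and the induced map from the group of even-cardinality subsets of $B$ modulo $S\sim S^c$ (under $\circ$) to $\frac12\mathbb{Z}^6/\mathbb{Z}^6$ is a group isomorphism; (iv) for $\#S_1,\#S_2$ even, $e_2(\eta(S_1),\eta(S_2))=(-1)^{\#(S_1\cap S_2)}$; (v) there is $U_\eta\subseteq B$ with $\#U_\eta\equiv 4\pmod 4$ such that for all $S$ of even cardinality $e_*(\eta(S))=(-1)^{(4-\#(S\circ U_\eta))/2}$ (one has $U_\eta=\{i\neq\infty: e_*(\eta(\{i\}))=-1\}\cup\{\infty\}$). Write $\eta_S=\eta(S)$, $\eta_i=\eta(\{i\})$. Theta constants: for $\xi\in\frac12\mathbb{Z}^6$, $\vartheta[\xi](Z)=\exp(\pi i\xi_1^TZ\xi_1+2\pi i\xi_1^T\xi_2)\sum_{n\in\mathbb{Z}^3}\exp(\pi i n^TZn+2\pi i n^T(\xi_2+Z\xi_1))$; $\xi$ is even if $e_*(\xi)=1$; vanishing of $\vartheta[\xi](Z)$ depends only on $\xi$ mod $\mathbb{Z}^6$. $\mathrm{Sp}_6(\mathbb{Z})$ is the group of integer $6\times6$ matrices preserving the form $x_1^Ty_2-x_2^Ty_1$; it acts on maps $\eta$ by $(\gamma\eta)(S)=\gamma\,\eta(S)$ (matrix times column vector), considered modulo $\mathbb{Z}^6$. With $Q(x)=x_1^Tx_2$, $\Gamma_{1,2}=\{\gamma\in\mathrm{Sp}_6(\mathbb{Z}):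 Q(\gamma x)\equiv Q(x)\pmod 2\}$. Mumford's map $\tilde\eta\in\Xi_3$ is determined (mod $\mathbb{Z}^6$) by $\tilde\eta_1=(\tfrac12,0,0,0,0,0)$, $\tilde\eta_2=(\tfrac12,0,0,\tfrac12,0,0)$, $\tilde\eta_3=(0,\tfrac12,0,\tfrac12,0,0)$, $\tilde\eta_4=(0,\tfrac12,0,\tfrac12,\tfrac12,0)$, $\tilde\eta_5=(0,0,\tfrac12,\tfrac12,\tfrac12,0)$, $\tilde\eta_6=(0,0,\tfrac12,\tfrac12,\tfrac12,\tfrac12)$, $\tilde\eta_7=(0,0,0,\tfrac12,\tfrac12,\tfrac12)$; it has $U_{\tilde\eta}=\{2,4,6,\infty\}$ and $\tilde\eta_{U_{\tilde\eta}}\equiv(\tfrac12,\tfrac12,\tfrac12,\tfrac12,0,\tfrac12)$. *)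

theory Defs
  imports "HOL-Analysis.Analysis"
begin

section \<open>Characteristics in (1/2)Z^6, written as pairs (x1, x2) of vectors in R^3\<close>

type_synonym vec6 = "(real^3) \<times> (real^3)"

definition half_int_vec :: "vec6 \<Rightarrow> bool" where
  "half_int_vec x \<longleftrightarrow> (\<forall>i. 2 * (fst x $ i) \<in> \<int>) \<and> (\<forall>i. 2 * (snd x $ i) \<in> \<int>)"

definition int_vec :: "vec6 \<Rightarrow> bool" where
  "int_vec x \<longleftrightarrow> (\<forall>i. fst x $ i \<in> \<int>) \<and> (\<forall>i. snd x $ i \<in> \<int>)"

definition cong6 :: "vec6 \<Rightarrow> vec6 \<Rightarrow> bool" where
  "cong6 x y \<longleftrightarrow> int_vec (fst x - fst y, snd x - snd y)"

definition symp :: "vec6 \<Rightarrow> vec6 \<Rightarrow> real" where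
  "symp x y = fst x \<bullet> snd y - snd x \<bullet> fst y"

definition estar :: "vec6 \<Rightarrow> complex" where
  "estar x = exp (4 * pi * \<i> * complex_of_real (fst x \<bullet> snd x))"

definition e2 :: "vec6 \<Rightarrow> vec6 \<Rightarrow> complex" where
  "e2 x y = exp (4 * pi * \<i> * complex_of_real (symp x y))"

definition even_char :: "vec6 \<Rightarrow> bool" where
  "even_char x \<longleftrightarrow> estar x = 1"

definition cdot :: "complex^3 \<Rightarrow> complex^3 \<Rightarrow> complex" where
  "cdot v w = (\<Sum>i\<in>UNIV. v $ i * w $ i)"

definition cvec_of_real :: "real^3 \<Rightarrow> complex^3" where
  "cvec_of_real v = (\<chi> i. complex_of_real (v $ i))"

definition cvec_of_int :: "int^3 \<Rightarrow> complex^3" where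
  "cvec_of_int n = (\<chi> i. of_int (n $ i))"

definition im_mat :: "complex^3^3 \<Rightarrow> real^3^3" where
  "im_mat Z = (\<chi> i j. Im (Z $ i $ j))"

definition siegel3 :: "complex^3^3 \<Rightarrow> bool" where
  "siegel3 Z \<longleftrightarrow> transpose Z = Z \<and> (\<forall>v::real^3. v \<noteq> 0 \<longrightarrow> v \<bullet> (im_mat Z *v v) > 0)"

definition theta :: "vec6 \<Rightarrow> complex^3^3 \<Rightarrow> complex" where
  "theta xi Z =
     (let x1 = cvec_of_real (fst xi); x2 = cvec_of_real (snd xi) in
      exp (pi * \<i> * cdot x1 (Z *v x1) + 2 * pi * \<i> * cdot x1 x2) *
      infsum (\<lambda>n::int^3. exp (pi * \<i> * cdot (cvec_of_int n) (Z *v cvec_of_int n)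
                 + 2 * pi * \<i> * cdot (cvec_of_int n) (x2 + Z *v x1))) UNIV)"

section \<open>Sp_6(Z) and Gamma_{1,2}; an integer 6x6 matrix is given by its 3x3 blocks (A,B;C,D)\<close>

type_synonym mat6 = "(int^3^3) \<times> (int^3^3) \<times> (int^3^3) \<times> (int^3^3)"

definition rmat :: "int^3^3 \<Rightarrow> real^3^3" where
  "rmat A = (\<chi> i j. real_of_int (A $ i $ j))"

definition apply6 :: "mat6 \<Rightarrow> vec6 \<Rightarrow> vec6" where
  "apply6 g x = (case g of (A, B, C, D) \<Rightarrow>
      (rmat A *v fst x + rmat B *v snd x, rmat C *v fst x + rmat D *v snd x))"

definition Sp6 :: "mat6 set" where
  "Sp6 = {g. \<forall>x y. symp (apply6 g x) (apply6 g y) = symp x y}"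

definition Gamma12 :: "mat6 set" where
  "Gamma12 = {g \<in> Sp6. \<forall>x. int_vec x \<longrightarrow>
      (fst (apply6 g x) \<bullet> snd (apply6 g x) - fst x \<bullet> snd x) / 2 \<in> \<int>}"

datatype bpt = Pt nat | Infty

definition Bset :: "bpt set" where
  "Bset = insert Infty (Pt ` {1..7})"

definition symdiff :: "'a set \<Rightarrow> 'a set \<Rightarrow> 'a set" where
  "symdiff S T = (S \<union> T) - (S \<inter> T)"

definition U_eta :: "(bpt set \<Rightarrow> vec6) \<Rightarrow> bpt set" where
  "U_eta eta = insert Infty {Pt i | i. i \<in> {1..7} \<and> estar (eta {Pt i}) = -1}"

definition act :: "mat6 \<Rightarrow> (bpt set \<Rightarrow> vec6) \<Rightarrow> (bpt set \<Rightarrow> vec6)" where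
  "act g eta = (\<lambda>S. apply6 g (eta S))"

definition v3 :: "real \<Rightarrow> real \<Rightarrow> real \<Rightarrow> real^3" where
  "v3 a b c = vector [a, b, c]"

text \<open>Mumford's map on single points\<close>
fun eta_tilde_pt :: "bpt \<Rightarrow> vec6" where
  "eta_tilde_pt (Pt k) =
     (if k = 1 then (v3 (1/2) 0 0, v3 0 0 0)
      else if k = 2 then (v3 (1/2) 0 0, v3 (1/2) 0 0)
      else if k = 3 then (v3 0 (1/2) 0, v3 (1/2) 0 0)
      else if k = 4 then (v3 0 (1/2) 0, v3 (1/2) (1/2) 0)
      else if k = 5 then (v3 0 0 (1/2), v3 (1/2) (1/2) 0)
      else if k = 6 then (v3 0 0 (1/2), v3 (1/2) (1/2) (1/2))
      else if k = 7 then (v3 0 0 0, v3 (1/2) (1/2) (1/2))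
      else (0, 0))"
| "eta_tilde_pt Infty = (0, 0)"

definition eta_tilde :: "bpt set \<Rightarrow> vec6" where
  "eta_tilde S = (\<Sum>i\<in>S. eta_tilde_pt i)"

definition vanishing_criterion :: "complex^3^3 \<Rightarrow> (bpt set \<Rightarrow> vec6) \<Rightarrow> bool" where
  "vanishing_criterion Z eta \<longleftrightarrow>
     (\<forall>S. S \<subseteq> Bset \<and> even (card S) \<longrightarrow>
        (theta (eta S) Z = 0 \<longleftrightarrow> card (symdiff S (U_eta eta)) \<noteq> 4))"

definition hyp_f :: "(nat \<Rightarrow> complex) \<Rightarrow> complex \<Rightarrow> complex" where
  "hyp_f a x = (\<Prod>i\<in>{1..7}. x - a i)"

text \<open>affine curve with the (finitely many) branch points removed\<close>
definition hyp_curve :: "(nat \<Rightarrow> complex) \<Rightarrow> (complex \<times> complex) set" where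
  "hyp_curve a = {(x, y). y^2 = hyp_f a x \<and> y \<noteq> 0}"

definition hyp_loops :: "(nat \<Rightarrow> complex) \<Rightarrow> (real \<Rightarrow> complex \<times> complex) set" where
  "hyp_loops a = {p. valid_path p \<and> pathfinish p = pathstart p \<and> path_image p \<subseteq> hyp_curve a}"

definition diff_integral :: "(complex \<Rightarrow> complex) \<Rightarrow> (real \<Rightarrow> complex \<times> complex) \<Rightarrow> complex" where
  "diff_integral P p = integral {0..1}
      (\<lambda>t. P (fst (p t)) / snd (p t) * vector_derivative (\<lambda>s. fst (p s)) (at t within {0..1}))"

text \<open>P j x dx / y (j = 1,2,3) is a basis of the holomorphic differentials, i.e. of
  {p(x) dx / y : deg p \<le> 2}\<close>
definition diff_basis :: "(3 \<Rightarrow> complex \<Rightarrow> complex) \<Rightarrow> bool" where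
  "diff_basis P \<longleftrightarrow> (\<forall>j. \<exists>c::nat \<Rightarrow> complex. \<forall>x. P j x = (\<Sum>k<3. c k * x ^ k)) \<and>
      (\<forall>l::complex^3. (\<forall>x. (\<Sum>j\<in>UNIV. l $ j * P j x) = 0) \<longrightarrow> l = 0)"

definition period_lattice :: "complex^3^3 \<Rightarrow> (complex^3) set" where
  "period_lattice Z = {cvec_of_int m + Z *v cvec_of_int n | m n. True}"

text \<open>(i/2) \<integral>_C omega_j \<and> conj(omega_k) = 2 \<integral>_C-plane P_j conj(P_k) / |f| dA  (two sheets)\<close>
definition hyp_gram :: "(nat \<Rightarrow> complex) \<Rightarrow> (3 \<Rightarrow> complex \<Rightarrow> complex) \<Rightarrow> complex^3^3" where
  "hyp_gram a P = (\<chi> j k. integral\<^sup>L lborel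
      (\<lambda>x::complex. 2 * P j x * cnj (P k x) / complex_of_real (cmod (hyp_f a x))))"

text \<open>Z is the period matrix (w.r.t. a symplectic basis A_i, B_i and the normalized differentials)
  of the hyperelliptic curve: the periods of the differentials over closed loops form exactly
  Z^3 + Z Z^3, and the Riemann bilinear relations (i/2)\<integral> omega_j \<and> conj omega_k = Im Z_jk hold,
  which forces the lattice basis (e_i, Z e_i) to be symplectic for the intersection form.\<close>
definition hyperelliptic_period_matrix :: "complex^3^3 \<Rightarrow> bool" where
  "hyperelliptic_period_matrix Z \<longleftrightarrow>
     (\<exists>a P. inj_on a {1..7} \<and> diff_basis P \<and>
        {(\<chi> j. diff_integral (P j) p) | p. p \<in> hyp_loops a} = period_lattice Z \<and>
        hyp_gram a P = (\<chi> j k. complex_of_real (Im (Z $ j $ k))))"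

text \<open>the abelian variety C^3 / (Z^3 + Z Z^3) is simple: it has no complex subtorus other than
  0 and itself\<close>
definition simple_jacobian :: "complex^3^3 \<Rightarrow> bool" where
  "simple_jacobian Z \<longleftrightarrow>
     \<not> (\<exists>W::(complex^3) set. subspace W \<and> (\<forall>v\<in>W. \<i> *s v \<in> W) \<and> W \<noteq> {0} \<and> W \<noteq> UNIV \<and>
           span (W \<inter> period_lattice Z) = W)"

end

theory Submission
  imports Defs
begin

lemma cdot_add_left: "cdot (a + b) c = cdot a c + cdot b c"
  by (simp add: cdot_def distrib_right sum.distrib)
lemma cdot_add_right: "cdot a (b + c) = cdot a b + cdot a c"
  by (simp add: cdot_def distrib_left sum.distrib)
lemma cdot_comm: "cdot a b = cdot b a"
  by (simp add: cdot_def mult.commute)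
lemma cdot_uminus_left: "cdot (-a) b = - cdot a b"
  by (simp add: cdot_def sum_negf)
lemma cdot_uminus_right: "cdot a (-b) = - cdot a b"
  by (simp add: cdot_def sum_negf)
lemma mv_add: "(Z::complex^3^3) *v (a + b) = Z *v a + Z *v b"
  by (simp add: matrix_vector_mult_def vec_eq_iff distrib_left sum.distrib)
lemma mv_uminus: "(Z::complex^3^3) *v (- a) = - (Z *v a)"
  by (simp add: matrix_vector_mult_def vec_eq_iff sum_negf)
lemma cdot_sym:
  assumes "transpose Z = Z"
  shows "cdot a (Z *v b) = cdot b (Z *v a)"
proof -
  have z: "Z $ i $ j = Z $ j $ i" for i j
    using arg_cong[OF assms, of "\<lambda>M. M $ j $ i"] by (simp add: transpose_def)
  have "cdot a (Z *v b) = (\<Sum>i\<in>UNIV. \<Sum>j\<in>UNIV. a $ i * (Z $ i $ j * b $ j))"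
    unfolding cdot_def matrix_vector_mult_def vec_lambda_beta by (simp only: sum_distrib_left)
  also have "\<dots> = (\<Sum>j\<in>UNIV. \<Sum>i\<in>UNIV. a $ i * (Z $ i $ j * b $ j))"
    by (rule sum.swap)
  also have "\<dots> = (\<Sum>j\<in>UNIV. \<Sum>i\<in>UNIV. b $ j * (Z $ j $ i * a $ i))"
  proof (intro sum.cong refl)
    fix i j
    show "a $ i * (Z $ i $ j * b $ j) = b $ j * (Z $ j $ i * a $ i)"
      unfolding z[of i j] by (simp only: mult.commute mult.left_commute)
  qed
  also have "\<dots> = cdot b (Z *v a)"
    unfolding cdot_def matrix_vector_mult_def vec_lambda_beta by (simp only: sum_distrib_left)
  finally show ?thesis .
qed

definition thG :: "vec6 \<Rightarrow> complex^3^3 \<Rightarrow> int^3 \<Rightarrow> complex" where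
  "thG xi Z n = (let u = cvec_of_int n + cvec_of_real (fst xi) in
      exp (pi * \<i> * cdot u (Z *v u) + 2 * pi * \<i> * cdot u (cvec_of_real (snd xi))))"

lemma theta_G:
  assumes "transpose Z = Z"
  shows "theta xi Z = infsum (thG xi Z) UNIV"
proof -
  define x1 where "x1 = cvec_of_real (fst xi)"
  define x2 where "x2 = cvec_of_real (snd xi)"
  have "theta xi Z = infsum (\<lambda>n. exp (pi * \<i> * cdot x1 (Z *v x1) + 2 * pi * \<i> * cdot x1 x2) *
      exp (pi * \<i> * cdot (cvec_of_int n) (Z *v cvec_of_int n)
                 + 2 * pi * \<i> * cdot (cvec_of_int n) (x2 + Z *v x1))) UNIV"
    unfolding theta_def Let_def x1_def[symmetric] x2_def[symmetric]
    by (rule infsum_cmult_right'[symmetric])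
  also have "\<dots> = infsum (thG xi Z) UNIV"
  proof (rule infsum_cong)
    fix n :: "int^3"
    have s: "cdot x1 (Z *v cvec_of_int n) = cdot (cvec_of_int n) (Z *v x1)"
      by (rule cdot_sym[OF assms])
    show "exp (pi * \<i> * cdot x1 (Z *v x1) + 2 * pi * \<i> * cdot x1 x2) *
      exp (pi * \<i> * cdot (cvec_of_int n) (Z *v cvec_of_int n)
                 + 2 * pi * \<i> * cdot (cvec_of_int n) (x2 + Z *v x1)) = thG xi Z n"
      unfolding thG_def Let_def x1_def[symmetric] x2_def[symmetric] exp_add[symmetric]
    proof (rule arg_cong[where f=exp])
      let ?n = "cvec_of_int n"
      have e1: "cdot (?n + x1) (Z *v (?n + x1)) = cdot ?n (Z *v ?n) + 2 * cdot ?n (Z *v x1) + cdot x1 (Z *v x1)"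
        by (simp add: mv_add cdot_add_left cdot_add_right s)
      have e2: "cdot (?n + x1) x2 = cdot ?n x2 + cdot x1 x2"
        by (simp add: cdot_add_left)
      show "pi * \<i> * cdot x1 (Z *v x1) + 2 * pi * \<i> * cdot x1 x2 +
          (pi * \<i> * cdot ?n (Z *v ?n) + 2 * pi * \<i> * cdot ?n (x2 + Z *v x1)) =
          pi * \<i> * cdot (?n + x1) (Z *v (?n + x1)) + 2 * pi * \<i> * cdot (?n + x1) x2"
        unfolding e1 e2 cdot_add_right by (simp add: algebra_simps)
    qed
  qed
  finally show ?thesis .
qed


lemma cvec_real_add: "cvec_of_real (a + b) = cvec_of_real a + cvec_of_real b"
  by (simp add: cvec_of_real_def vec_eq_iff)
lemma cvec_real_minus: "cvec_of_real (- a) = - cvec_of_real a"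
  by (simp add: cvec_of_real_def vec_eq_iff)
lemma cvec_int_add: "cvec_of_int (a + b) = cvec_of_int a + cvec_of_int b"
  by (simp add: cvec_of_int_def vec_eq_iff)
lemma cvec_int_minus: "cvec_of_int (- a) = - cvec_of_int a"
  by (simp add: cvec_of_int_def vec_eq_iff)
lemma cdot_real: "cdot (cvec_of_real a) (cvec_of_real b) = complex_of_real (a \<bullet> b)"
  by (simp add: cdot_def cvec_of_real_def inner_vec_def)

lemma int_vec_obtain:
  assumes "\<forall>i. (m::real^3) $ i \<in> \<int>"
  obtains k :: "int^3" where "cvec_of_real m = cvec_of_int k" "m = (\<chi> i. of_int (k $ i))"
proof -
  define k where "k = (\<chi> i. \<lfloor>m $ i\<rfloor>)"
  have "of_int (k $ i) = m $ i" for i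
    using assms unfolding k_def by (auto elim!: Ints_cases)
  moreover have "complex_of_real (m $ i) = of_int (k $ i)" for i
    by (simp add: calculation[symmetric])
  ultimately show ?thesis
    by (intro that[of k]) (simp_all add: cvec_of_real_def cvec_of_int_def vec_eq_iff)
qed

lemma exp_2pi_int: "exp (2 * pi * \<i> * of_int j) = 1"
  by (simp add: exp_eq_1)

lemma exp_2pi_int': "exp (2 * (complex_of_real pi * (\<i> * complex_of_int j))) = 1"
  using exp_2pi_int[of j] by (simp add: mult.assoc)

lemma cdot_int_Ints: "\<exists>j::int. cdot (cvec_of_int n) (cvec_of_int k) = of_int j"
  by (rule exI[of _ "\<Sum>i\<in>UNIV. n $ i * k $ i"]) (simp add: cdot_def cvec_of_int_def)

lemma theta_shift1:
  assumes "transpose Z = Z" "\<forall>i. m1 $ i \<in> \<int>"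
  shows "theta (x1 + m1, x2) Z = theta (x1, x2) Z"
proof -
  obtain k where k: "cvec_of_real m1 = cvec_of_int k" using int_vec_obtain assms(2) by blast
  have eq: "thG (x1 + m1, x2) Z = (\<lambda>n. thG (x1, x2) Z (n + k))"
  proof
    fix n
    have "cvec_of_int n + cvec_of_real (x1 + m1) = cvec_of_int (n + k) + cvec_of_real x1"
      unfolding cvec_real_add cvec_int_add k by (simp add: algebra_simps)
    then show "thG (x1 + m1, x2) Z n = thG (x1, x2) Z (n + k)"
      unfolding thG_def Let_def fst_conv snd_conv by (simp only:)
  qed
  have "bij_betw (\<lambda>n. n + k) UNIV UNIV"
    by (rule bij_betwI[of _ _ _ "\<lambda>n. n - k"]) auto
  from infsum_reindex_bij_betw[OF this, of "thG (x1, x2) Z"]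
  have "infsum (\<lambda>n. thG (x1, x2) Z (n + k)) UNIV = infsum (thG (x1, x2) Z) UNIV" .
  then show ?thesis
    unfolding theta_G[OF assms(1)] eq .
qed

lemma theta_shift2:
  assumes "transpose Z = Z" "\<forall>i. m2 $ i \<in> \<int>"
  shows "theta (x1, x2 + m2) Z = exp (2 * pi * \<i> * complex_of_real (x1 \<bullet> m2)) * theta (x1, x2) Z"
proof -
  obtain k where k: "cvec_of_real m2 = cvec_of_int k" using int_vec_obtain assms(2) by blast
  have "thG (x1, x2 + m2) Z n = exp (2 * pi * \<i> * complex_of_real (x1 \<bullet> m2)) * thG (x1, x2) Z n" for n
  proof -
    obtain j where j: "cdot (cvec_of_int n) (cvec_of_int k) = of_int j" using cdot_int_Ints by blast
    let ?u = "cvec_of_int n + cvec_of_real x1"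
    have "cdot ?u (cvec_of_real (x2 + m2)) = cdot ?u (cvec_of_real x2) + of_int j + complex_of_real (x1 \<bullet> m2)"
      by (simp add: cvec_real_add cdot_add_left cdot_add_right cdot_real[symmetric] j[symmetric] k)
    then show ?thesis
      by (simp add: thG_def Let_def distrib_left exp_add exp_2pi_int' mult.assoc)
  qed
  then have "thG (x1, x2 + m2) Z = (\<lambda>n. exp (2 * pi * \<i> * complex_of_real (x1 \<bullet> m2)) * thG (x1, x2) Z n)"
    by blast
  then show ?thesis
    by (simp add: theta_G[OF assms(1)] infsum_cmult_right')
qed

lemma theta_neg:
  assumes "transpose Z = Z"
  shows "theta (- x1, - x2) Z = theta (x1, x2) Z"
proof -
  have "thG (- x1, - x2) Z (- n) = thG (x1, x2) Z n" for n
  proof -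
    have eq: "cvec_of_int (- n) + cvec_of_real (- x1) = - (cvec_of_int n + cvec_of_real x1)"
      by (simp add: cvec_int_minus cvec_real_minus)
    have "thG (- x1, - x2) Z (- n) = (let u = - (cvec_of_int n + cvec_of_real x1) in
      exp (pi * \<i> * cdot u (Z *v u) + 2 * pi * \<i> * cdot u (cvec_of_real (- x2))))"
      by (simp only: thG_def fst_conv snd_conv eq)
    also have "\<dots> = thG (x1, x2) Z n"
      unfolding Let_def thG_def mv_uminus cdot_uminus_left cdot_uminus_right cvec_real_minus
      by simp
    finally show ?thesis .
  qed
  moreover have "bij_betw (\<lambda>n::int^3. - n) UNIV UNIV"
    by (rule bij_betwI[of _ _ _ "\<lambda>n. - n"]) auto
  ultimately show ?thesis
    using infsum_reindex_bij_betw[of "\<lambda>n::int^3. - n" UNIV UNIV "thG (- x1, - x2) Z"]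
    by (simp add: theta_G[OF assms(1)])
qed


lemma theta_cong:
  assumes "transpose Z = Z" "cong6 x y"
  shows "theta x Z = 0 \<longleftrightarrow> theta y Z = 0"
proof -
  obtain a b c d where xy: "x = (a, b)" "y = (c, d)" by (cases x, cases y) auto
  have j1: "(a - c) $ i \<in> \<int>" and j2: "(b - d) $ i \<in> \<int>" for i
    using assms(2) unfolding cong6_def int_vec_def xy by simp_all
  have i1: "\<forall>i. (c - a) $ i \<in> \<int>"
  proof
    fix i have "(c - a) $ i = - ((a - c) $ i)" by simp
    then show "(c - a) $ i \<in> \<int>" using Ints_minus[OF j1[of i]] by simp
  qed
  have i2: "\<forall>i. (d - b) $ i \<in> \<int>"
  proof
    fix i have "(d - b) $ i = - ((b - d) $ i)" by simp
    then show "(d - b) $ i \<in> \<int>" using Ints_minus[OF j2[of i]] by simp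
  qed
  have "theta y Z = theta (a + (c - a), b + (d - b)) Z" by (simp add: xy)
  also have "\<dots> = exp (2 * pi * \<i> * complex_of_real ((a + (c - a)) \<bullet> (d - b))) * theta (a + (c - a), b) Z"
    by (rule theta_shift2[OF assms(1) i2])
  also have "theta (a + (c - a), b) Z = theta x Z"
    unfolding xy by (rule theta_shift1[OF assms(1) i1])
  finally show ?thesis by simp
qed

lemma theta_odd:
  assumes "transpose Z = Z" "half_int_vec x" "estar x = -1"
  shows "theta x Z = 0"
proof -
  obtain a b where x: "x = (a, b)" by (cases x) auto
  have i1: "\<forall>i. (- 2 *\<^sub>R a) $ i \<in> \<int>" and i2: "\<forall>i. (- 2 *\<^sub>R b) $ i \<in> \<int>"
    using assms(2) unfolding half_int_vec_def x by auto
  have "theta x Z = theta (- a, - b) Z" using theta_neg[OF assms(1)] x by simp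
  also have "\<dots> = theta (a + (- 2 *\<^sub>R a), b + (- 2 *\<^sub>R b)) Z"
  proof -
    have h1: "a + (- 2 *\<^sub>R a) = - a" and h2: "b + (- 2 *\<^sub>R b) = - b" by (simp_all add: vec_eq_iff)
    show ?thesis by (simp only: h1 h2)
  qed
  also have "\<dots> = exp (2 * pi * \<i> * complex_of_real ((a + (- 2 *\<^sub>R a)) \<bullet> (- 2 *\<^sub>R b))) * theta (a + (- 2 *\<^sub>R a), b) Z"
    by (rule theta_shift2[OF assms(1) i2])
  also have "theta (a + (- 2 *\<^sub>R a), b) Z = theta x Z"
    unfolding x by (rule theta_shift1[OF assms(1) i1])
  also have "(a + (- 2 *\<^sub>R a)) \<bullet> (- 2 *\<^sub>R b) = 2 * (a \<bullet> b)"
    by (simp add: algebra_simps inner_diff_left)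
  also have "exp (2 * pi * \<i> * complex_of_real (2 * (a \<bullet> b))) = estar x"
    by (simp add: estar_def x algebra_simps)
  finally have eq: "theta x Z = estar x * theta x Z" .
  have "(1 - estar x) * theta x Z = theta x Z - estar x * theta x Z" by (simp add: algebra_simps)
  also have "\<dots> = 0" by (simp add: eq[symmetric])
  finally show ?thesis using assms(3) by simp
qed

lemma Bset_eq: "Bset = {Infty, Pt 1, Pt 2, Pt 3, Pt 4, Pt 5, Pt 6, Pt 7}"
proof -
  have "{1..7::nat} = {1,2,3,4,5,6,7}" by auto
  then show ?thesis by (simp add: Bset_def)
qed

lemma card_sub_Bset:
  assumes "S \<subseteq> Bset"
  shows "card S = of_bool (Infty \<in> S) + of_bool (Pt 1 \<in> S) + of_bool (Pt 2 \<in> S) + of_bool (Pt 3 \<in> S)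
     + of_bool (Pt 4 \<in> S) + of_bool (Pt 5 \<in> S) + of_bool (Pt 6 \<in> S) + of_bool (Pt 7 \<in> S)"
proof -
  have "card S = card (Bset \<inter> {x. x \<in> S})" using assms by (metis Collect_mem_eq inf.absorb_iff2)
  also have "\<dots> = (\<Sum>x\<in>Bset. of_bool (x \<in> S))"
    by (simp add: Bset_def)
  also have "\<dots> = of_bool (Infty \<in> S) + of_bool (Pt 1 \<in> S) + of_bool (Pt 2 \<in> S) + of_bool (Pt 3 \<in> S)
     + of_bool (Pt 4 \<in> S) + of_bool (Pt 5 \<in> S) + of_bool (Pt 6 \<in> S) + of_bool (Pt 7 \<in> S)"
    unfolding Bset_eq by (simp del: sum_of_bool_eq)
  finally show ?thesis .
qed

lemma eta_tilde_sub:
  assumes "S \<subseteq> Bset"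
  shows "eta_tilde S = (\<Sum>x\<in>Bset. of_bool (x \<in> S) *\<^sub>R eta_tilde_pt x)"
proof -
  have "eta_tilde S = sum eta_tilde_pt (Bset \<inter> S)"
    using assms by (simp add: eta_tilde_def inf.absorb2)
  also have "\<dots> = (\<Sum>x\<in>Bset. if x \<in> S then eta_tilde_pt x else 0)"
    by (rule sum.inter_restrict) (simp add: Bset_def)
  also have "\<dots> = (\<Sum>x\<in>Bset. of_bool (x \<in> S) *\<^sub>R eta_tilde_pt x)"
    by (rule sum.cong) auto
  finally show ?thesis .
qed

lemma v3_nth [simp]: "v3 a b c $ 1 = a" "v3 a b c $ 2 = b" "v3 a b c $ 3 = c"
  by (simp_all add: v3_def)

lemma eta_tilde_formula:
  assumes "S \<subseteq> Bset"
  defines "t \<equiv> \<lambda>i. of_bool (Pt i \<in> S) :: int"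
  shows "eta_tilde S = (v3 (of_int (t 1 + t 2) / 2) (of_int (t 3 + t 4) / 2) (of_int (t 5 + t 6) / 2),
     v3 (of_int (t 2 + t 3 + t 4 + t 5 + t 6 + t 7) / 2) (of_int (t 4 + t 5 + t 6 + t 7) / 2) (of_int (t 6 + t 7) / 2))"
  unfolding eta_tilde_sub[OF assms(1)] Bset_eq
  by (simp add: prod_eq_iff vec_eq_iff forall_3 t_def fst_sum snd_sum add_divide_distrib)


lemma card_symdiff_U:
  assumes "S \<subseteq> Bset"
  shows "card (symdiff S {Infty, Pt 2, Pt 4, Pt 6}) = of_bool (Infty \<notin> S) + of_bool (Pt 1 \<in> S) + of_bool (Pt 2 \<notin> S) + of_bool (Pt 3 \<in> S)
     + of_bool (Pt 4 \<notin> S) + of_bool (Pt 5 \<in> S) + of_bool (Pt 6 \<notin> S) + of_bool (Pt 7 \<in> S)"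
proof -
  have "symdiff S {Infty, Pt 2, Pt 4, Pt 6} \<subseteq> Bset"
    using assms by (auto simp: symdiff_def Bset_eq)
  from card_sub_Bset[OF this] show ?thesis
    by (simp add: symdiff_def)
qed

lemma comb_check:
  fixes b0 b1 b2 b3 b4 b5 b6 b7 :: bool and A1 A2 A3 B1 B2 B3 p :: int and c k :: nat
  assumes "A1 = of_bool b1 + of_bool b2"
  and "A2 = of_bool b3 + of_bool b4"
  and "A3 = of_bool b5 + of_bool b6"
  and "B1 = of_bool b2 + of_bool b3 + of_bool b4 + of_bool b5 + of_bool b6 + of_bool b7"
  and "B2 = of_bool b4 + of_bool b5 + of_bool b6 + of_bool b7"
  and "B3 = of_bool b6 + of_bool b7"
  and "c = of_bool b0 + of_bool b1 + of_bool b2 + of_bool b3 + of_bool b4 + of_bool b5 + of_bool b6 + of_bool b7"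
  and "k = of_bool (\<not> b0) + of_bool b1 + of_bool (\<not> b2) + of_bool b3 + of_bool (\<not> b4) + of_bool b5 + of_bool (\<not> b6) + of_bool b7"
  and "p = A1 * B1 + A2 * B2 + A3 * B3"
  and "cg = (even (A1 - 1) \<and> even (A2 - 1) \<and> even (A3 - 1) \<and> even (B1 - 1) \<and> even B2 \<and> even (B3 - 1))"
  and "even c"
  shows "(k = 4 \<longrightarrow> even p \<and> \<not> cg) \<and> (k = 2 \<or> k = 6 \<longrightarrow> odd p) \<and> (k = 0 \<or> k = 8 \<longrightarrow> cg)
     \<and> (k = 0 \<or> k = 2 \<or> k = 4 \<or> k = 6 \<or> k = 8)"
  using assms
  by (cases b0; cases b1; cases b2; cases b3; cases b4; cases b5; cases b6; cases b7) simp_all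

lemma apply6_add: "apply6 g (x + y) = apply6 g x + apply6 g y"
  by (cases g) (simp add: apply6_def matrix_vector_right_distrib algebra_simps)
lemma apply6_diff: "apply6 g (x - y) = apply6 g x - apply6 g y"
  by (cases g) (simp add: apply6_def matrix_vector_mult_diff_distrib algebra_simps)
lemma apply6_scale: "apply6 g (c *\<^sub>R x) = c *\<^sub>R apply6 g x"
  by (cases g) (simp add: apply6_def matrix_vector_mult_scaleR scaleR_right_distrib)
lemma apply6_zero: "apply6 g 0 = 0"
  using apply6_scale[of g 0 0] by simp

lemma rmat_Ints: "(\<forall>i. v $ i \<in> \<int>) \<Longrightarrow> (rmat A *v v) $ i \<in> \<int>"
  by (auto simp: rmat_def matrix_vector_mult_def intro!: Ints_sum Ints_mult)

lemma int_vec_apply6: "int_vec x \<Longrightarrow> int_vec (apply6 g x)"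
  by (cases g) (auto simp: int_vec_def apply6_def intro!: Ints_add rmat_Ints)

lemma int_vec_add: "int_vec x \<Longrightarrow> int_vec y \<Longrightarrow> int_vec (x + y)"
  by (auto simp: int_vec_def)
lemma int_vec_diff: "int_vec x \<Longrightarrow> int_vec y \<Longrightarrow> int_vec (x - y)"
  by (auto simp: int_vec_def)
lemma int_vec_minus: "int_vec x \<Longrightarrow> int_vec (- x)"
  by (auto simp: int_vec_def)

lemma cong6_iff: "cong6 x y \<longleftrightarrow> int_vec (x - y)"
  by (cases x, cases y) (simp add: cong6_def)

lemma cong6_sym: "cong6 x y \<Longrightarrow> cong6 y x"
  unfolding cong6_iff by (metis int_vec_minus minus_diff_eq)
lemma cong6_trans: "cong6 x y \<Longrightarrow> cong6 y z \<Longrightarrow> cong6 x z"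
  unfolding cong6_iff using int_vec_add[of "x - y" "y - z"] by simp
lemma cong6_apply: "cong6 x y \<Longrightarrow> cong6 (apply6 g x) (apply6 g y)"
  unfolding cong6_iff apply6_diff[symmetric] by (rule int_vec_apply6)

lemma half_int_iff: "half_int_vec x \<longleftrightarrow> int_vec (2 *\<^sub>R x)"
  by (simp add: half_int_vec_def int_vec_def)

lemma half_int_apply6: "half_int_vec x \<Longrightarrow> half_int_vec (apply6 g x)"
  unfolding half_int_iff apply6_scale[symmetric] by (rule int_vec_apply6)

lemma inner_Ints: "(\<forall>i. (a::real^3) $ i \<in> \<int>) \<Longrightarrow> (\<forall>i. b $ i \<in> \<int>) \<Longrightarrow> a \<bullet> b \<in> \<int>"
  by (auto simp: inner_vec_def intro!: Ints_sum Ints_mult)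

lemma symp_Ints: "int_vec x \<Longrightarrow> int_vec y \<Longrightarrow> symp x y \<in> \<int>"
  by (auto simp: symp_def int_vec_def intro!: Ints_diff inner_Ints)

lemma int_vec_inj:
  assumes "g \<in> Sp6" "int_vec (apply6 g v)"
  shows "int_vec v"
proof -
  have sp: "symp (apply6 g v) (apply6 g w) = symp v w" for w
    using assms(1) unfolding Sp6_def mem_Collect_eq by blast
  have iw1: "int_vec (0, axis i 1)" and iw2: "int_vec (axis i 1, 0)" for i
    by (auto simp: int_vec_def axis_def)
  have "symp v (0, axis i 1) \<in> \<int>" for i
    using symp_Ints[OF assms(2) int_vec_apply6[OF iw1]] sp by metis
  then have a: "fst v $ i \<in> \<int>" for i by (simp add: symp_def inner_axis)
  have "symp v (axis i 1, 0) \<in> \<int>" for i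
    using symp_Ints[OF assms(2) int_vec_apply6[OF iw2]] sp by metis
  then have "- (snd v $ i) \<in> \<int>" for i by (simp add: symp_def inner_axis)
  then have b: "snd v $ i \<in> \<int>" for i using Ints_minus by fastforce
  show ?thesis using a b by (simp add: int_vec_def)
qed

lemma estar_Gamma12:
  assumes "g \<in> Gamma12" "half_int_vec x"
  shows "estar (apply6 g x) = estar x"
proof -
  have iy: "int_vec (2 *\<^sub>R x)" using assms(2) half_int_iff by blast
  have "(fst (apply6 g (2 *\<^sub>R x)) \<bullet> snd (apply6 g (2 *\<^sub>R x)) - fst (2 *\<^sub>R x) \<bullet> snd (2 *\<^sub>R x)) / 2 \<in> \<int>"
    using assms(1) iy unfolding Gamma12_def mem_Collect_eq by blast
  also have "(fst (apply6 g (2 *\<^sub>R x)) \<bullet> snd (apply6 g (2 *\<^sub>R x)) - fst (2 *\<^sub>R x) \<bullet> snd (2 *\<^sub>R x)) / 2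
      = 2 * (fst (apply6 g x) \<bullet> snd (apply6 g x) - fst x \<bullet> snd x)"
    by (simp add: apply6_scale field_simps)
  finally obtain j :: int where j: "2 * (fst (apply6 g x) \<bullet> snd (apply6 g x) - fst x \<bullet> snd x) = of_int j"
    by (auto elim: Ints_cases)
  have e: "fst (apply6 g x) \<bullet> snd (apply6 g x) = fst x \<bullet> snd x + of_int j / 2" using j by simp
  have "estar (apply6 g x) = exp (4 * pi * \<i> * complex_of_real (fst x \<bullet> snd x) + 2 * pi * \<i> * of_int j)"
    unfolding estar_def e by (simp add: algebra_simps)
  also have "\<dots> = estar x * exp (2 * pi * \<i> * of_int j)"
    by (simp add: exp_add estar_def)
  also have "exp (2 * pi * \<i> * of_int j) = 1" by (simp add: exp_eq_1)
  finally show ?thesis by simp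
qed

lemma estar_v3: "estar (v3 a b c, v3 d e f) = exp (4 * pi * \<i> * complex_of_real (a * d + b * e + c * f))"
  by (simp add: estar_def inner_vec_def sum_3)

lemma exp_pi_int: "exp (pi * \<i> * of_int p) = (if even p then 1 else -1)"
proof (cases "even p")
  case True
  then obtain q where "p = 2 * q" by auto
  then show ?thesis using True by (simp add: exp_eq_1)
next
  case False
  then obtain q where q: "p = 2 * q + 1" using oddE by blast
  have "exp (pi * \<i> * of_int p) = exp (2 * pi * \<i> * of_int q) * exp (pi * \<i>)"
    by (simp add: q exp_add[symmetric] algebra_simps)
  also have "\<dots> = -1" by (simp add: exp_eq_1)
  finally show ?thesis using False by simp
qed

lemma half_Ints: "((of_int a :: real) / 2) \<in> \<int> \<longleftrightarrow> even a"
proof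
  assume "(of_int a :: real) / 2 \<in> \<int>"
  then obtain j where "(of_int a :: real) / 2 = of_int j" by (auto elim: Ints_cases)
  then have "a = 2 * j" by linarith
  then show "even a" by simp
next
  assume "even a"
  then obtain j where "a = 2 * j" by auto
  then show "((of_int a :: real) / 2) \<in> \<int>" by simp
qed

lemma half_Ints2: "((of_int a :: real) / 2 - 1 / 2) \<in> \<int> \<longleftrightarrow> even (a - 1)"
proof -
  have eq: "((of_int a :: real) / 2 - 1 / 2) = of_int (a - 1) / 2" by (simp add: field_simps)
  show ?thesis unfolding eq half_Ints ..
qed

lemma estar_pt:
  "estar (eta_tilde_pt (Pt 1)) = 1" "estar (eta_tilde_pt (Pt 2)) = -1"
  "estar (eta_tilde_pt (Pt 3)) = 1" "estar (eta_tilde_pt (Pt 4)) = -1"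
  "estar (eta_tilde_pt (Pt 5)) = 1" "estar (eta_tilde_pt (Pt 6)) = -1"
  "estar (eta_tilde_pt (Pt 7)) = 1"
  using exp_pi_int[of 1] by (simp_all add: estar_v3 v3_def[symmetric] zero_vec_def algebra_simps)


lemma half_int_pt: "half_int_vec (eta_tilde_pt x)"
proof (cases x)
  case (Pt k)
  then show ?thesis
    by (auto simp: half_int_vec_def forall_3 zero_vec_def[symmetric])
next
  case Infty
  then show ?thesis by (simp add: half_int_vec_def)
qed

lemma act_single: "act g eta_tilde {x} = apply6 g (eta_tilde_pt x)"
  by (simp add: act_def eta_tilde_def)

lemma U_eta_act:
  assumes "g \<in> Gamma12"
  shows "U_eta (act g eta_tilde) = {Infty, Pt 2, Pt 4, Pt 6}"
proof -
  have e: "estar (act g eta_tilde {Pt i}) = estar (eta_tilde_pt (Pt i))" for i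
    unfolding act_single by (rule estar_Gamma12[OF assms half_int_pt])
  have "{Pt i | i. i \<in> {1..7} \<and> estar (act g eta_tilde {Pt i}) = -1} = {Pt 2, Pt 4, Pt 6}"
  proof (rule set_eqI, rule iffI)
    fix x assume "x \<in> {Pt i | i. i \<in> {1..7} \<and> estar (act g eta_tilde {Pt i}) = -1}"
    then obtain i where i: "x = Pt i" "i \<in> {1..7}" "estar (eta_tilde_pt (Pt i)) = -1"
      using e by auto
    then have "i = 1 \<or> i = 2 \<or> i = 3 \<or> i = 4 \<or> i = 5 \<or> i = 6 \<or> i = 7" by auto
    then show "x \<in> {Pt 2, Pt 4, Pt 6}" using i estar_pt by auto
  next
    fix x assume x: "x \<in> {Pt 2, Pt 4, Pt 6}"
    have p2: "estar (act g eta_tilde {Pt 2}) = -1" by (simp only: e estar_pt)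
    have p4: "estar (act g eta_tilde {Pt 4}) = -1" by (simp only: e estar_pt)
    have p6: "estar (act g eta_tilde {Pt 6}) = -1" by (simp only: e estar_pt)
    have "Pt 2 \<in> {Pt i | i. i \<in> {1..7} \<and> estar (act g eta_tilde {Pt i}) = -1}"
      using p2 by force
    moreover have "Pt 4 \<in> {Pt i | i. i \<in> {1..7} \<and> estar (act g eta_tilde {Pt i}) = -1}"
      using p4 by force
    moreover have "Pt 6 \<in> {Pt i | i. i \<in> {1..7} \<and> estar (act g eta_tilde {Pt i}) = -1}"
      using p6 by force
    ultimately show "x \<in> {Pt i | i. i \<in> {1..7} \<and> estar (act g eta_tilde {Pt i}) = -1}"
      using x by blast
  qed
  then show ?thesis by (simp add: U_eta_def insert_commute)
qed


lemma main_S: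
  fixes Z :: "complex^3^3" and \<delta> :: vec6
  assumes Zs: "transpose Z = Z" and g: "g \<in> Gamma12"
    and th\<delta>: "theta \<delta> Z = 0"
    and uniq: "\<forall>\<xi>. half_int_vec \<xi> \<and> even_char \<xi> \<and> theta \<xi> Z = 0 \<longrightarrow> cong6 \<xi> \<delta>"
    and g\<delta>: "cong6 (apply6 g (v3 (1/2) (1/2) (1/2), v3 (1/2) 0 (1/2))) \<delta>"
    and S: "S \<subseteq> Bset" and ev: "even (card S)"
  shows "theta (act g eta_tilde S) Z = 0 \<longleftrightarrow> card (symdiff S (U_eta (act g eta_tilde))) \<noteq> 4"
proof -
  define c0 :: vec6 where "c0 = (v3 (1/2) (1/2) (1/2), v3 (1/2) 0 (1/2))"
  define t where "t = (\<lambda>i. of_bool (Pt i \<in> S) :: int)"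
  define A1 where "A1 = t 1 + t 2"
  define A2 where "A2 = t 3 + t 4"
  define A3 where "A3 = t 5 + t 6"
  define B1 where "B1 = t 2 + t 3 + t 4 + t 5 + t 6 + t 7"
  define B2 where "B2 = t 4 + t 5 + t 6 + t 7"
  define B3 where "B3 = t 6 + t 7"
  define p where "p = A1 * B1 + A2 * B2 + A3 * B3"
  define cg where "cg = (even (A1 - 1) \<and> even (A2 - 1) \<and> even (A3 - 1) \<and> even (B1 - 1) \<and> even B2 \<and> even (B3 - 1))"
  define k where "k = card (symdiff S {Infty, Pt 2, Pt 4, Pt 6})"
  define x where "x = eta_tilde S"
  have xf: "x = (v3 (of_int A1 / 2) (of_int A2 / 2) (of_int A3 / 2), v3 (of_int B1 / 2) (of_int B2 / 2) (of_int B3 / 2))"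
    unfolding x_def eta_tilde_formula[OF S] A1_def A2_def A3_def B1_def B2_def B3_def t_def ..
  have U: "U_eta (act g eta_tilde) = {Infty, Pt 2, Pt 4, Pt 6}" by (rule U_eta_act[OF g])
  have actS: "act g eta_tilde S = apply6 g x" by (simp add: act_def x_def)
  have cS: "card S = of_bool (Infty \<in> S) + of_bool (Pt 1 \<in> S) + of_bool (Pt 2 \<in> S) + of_bool (Pt 3 \<in> S)
     + of_bool (Pt 4 \<in> S) + of_bool (Pt 5 \<in> S) + of_bool (Pt 6 \<in> S) + of_bool (Pt 7 \<in> S)"
    by (rule card_sub_Bset[OF S])
  have kS: "k = of_bool (Infty \<notin> S) + of_bool (Pt 1 \<in> S) + of_bool (Pt 2 \<notin> S) + of_bool (Pt 3 \<in> S)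
     + of_bool (Pt 4 \<notin> S) + of_bool (Pt 5 \<in> S) + of_bool (Pt 6 \<notin> S) + of_bool (Pt 7 \<in> S)"
    unfolding k_def by (rule card_symdiff_U[OF S])
  have cc: "(k = 4 \<longrightarrow> even p \<and> \<not> cg) \<and> (k = 2 \<or> k = 6 \<longrightarrow> odd p) \<and> (k = 0 \<or> k = 8 \<longrightarrow> cg)
     \<and> (k = 0 \<or> k = 2 \<or> k = 4 \<or> k = 6 \<or> k = 8)"
    by (rule comb_check[OF A1_def[unfolded t_def] A2_def[unfolded t_def] A3_def[unfolded t_def]
          B1_def[unfolded t_def] B2_def[unfolded t_def] B3_def[unfolded t_def] cS kS p_def cg_def ev])
  have hx: "half_int_vec x"
    unfolding xf by (simp add: half_int_vec_def forall_3)
  have hgx: "half_int_vec (apply6 g x)" by (rule half_int_apply6[OF hx])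
  have esx: "estar x = (if even p then 1 else -1)"
  proof -
    have "estar x = exp (pi * \<i> * of_int p)"
      unfolding xf estar_v3 p_def by (simp add: algebra_simps)
    then show ?thesis by (simp add: exp_pi_int)
  qed
  have esgx: "estar (apply6 g x) = estar x" by (rule estar_Gamma12[OF g hx])
  have cgx: "cong6 x c0 \<longleftrightarrow> cg"
    unfolding xf c0_def cong6_def int_vec_def cg_def
    by (simp add: forall_3 half_Ints half_Ints2 del: of_int_diff)
  have Sp: "g \<in> Sp6" using g by (simp add: Gamma12_def)
  show ?thesis
    unfolding U actS k_def[symmetric]
  proof (cases "k = 4")
    case True
    then have "even p" "\<not> cg" using cc by auto
    have "theta (apply6 g x) Z \<noteq> 0"
    proof
      assume "theta (apply6 g x) Z = 0"
      moreover have "even_char (apply6 g x)" using esgx esx \<open>even p\<close> by (simp add: even_char_def)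
      ultimately have "cong6 (apply6 g x) \<delta>" using uniq hgx by blast
      then have "cong6 (apply6 g x) (apply6 g c0)" using g\<delta> cong6_sym cong6_trans unfolding c0_def by blast
      then have "int_vec (apply6 g (x - c0))" by (simp add: cong6_iff apply6_diff)
      then have "cong6 x c0" using int_vec_inj[OF Sp] cong6_iff by blast
      then show False using cgx \<open>\<not> cg\<close> by simp
    qed
    then show "(theta (apply6 g x) Z = 0) = (k \<noteq> 4)" using True by simp
  next
    case False
    then have k: "k = 0 \<or> k = 2 \<or> k = 6 \<or> k = 8" using cc by auto
    have "theta (apply6 g x) Z = 0"
    proof (cases "k = 2 \<or> k = 6")
      case True
      then have "odd p" using cc by auto
      then have "estar (apply6 g x) = -1" using esgx esx by simp
      then show ?thesis by (rule theta_odd[OF Zs hgx])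
    next
      case False
      then have "cg" using cc k by auto
      then have "cong6 x c0" using cgx by simp
      then have "cong6 (apply6 g x) (apply6 g c0)" by (rule cong6_apply)
      then have "cong6 (apply6 g x) \<delta>" using g\<delta> cong6_trans unfolding c0_def by blast
      then show ?thesis using theta_cong[OF Zs] th\<delta> by blast
    qed
    then show "(theta (apply6 g x) Z = 0) = (k \<noteq> 4)" using False by simp
  qed
qed

definition ivec :: "int^3 \<Rightarrow> real^3" where "ivec v = (\<chi> i. of_int (v $ i))"
definition outer :: "int^3 \<Rightarrow> int^3 \<Rightarrow> int^3^3" where "outer a b = (\<chi> i j. a $ i * b $ j)"
definition transv :: "int^3 \<Rightarrow> int^3 \<Rightarrow> mat6" where
  "transv v1 v2 = (mat 1 + outer v1 v2, - outer v1 v1, outer v2 v2, mat 1 - outer v2 v1)"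
definition mult6 :: "mat6 \<Rightarrow> mat6 \<Rightarrow> mat6" where
  "mult6 g h = (case g of (A, B, C, D) \<Rightarrow> case h of (A', B', C', D') \<Rightarrow>
     (A ** A' + B ** C', A ** B' + B ** D', C ** A' + D ** C', C ** B' + D ** D'))"

lemma rmat_add: "rmat (A + B) = rmat A + rmat B"
  by (simp add: rmat_def vec_eq_iff)
lemma rmat_mult: "rmat (A ** B) = rmat A ** rmat B"
  by (simp add: rmat_def vec_eq_iff matrix_matrix_mult_def)

lemma apply6_mult6: "apply6 (mult6 g h) x = apply6 g (apply6 h x)"
  by (cases g, cases h)
     (simp add: mult6_def apply6_def rmat_add rmat_mult matrix_vector_mult_add_rdistrib
        matrix_vector_right_distrib matrix_vector_mul_assoc algebra_simps)

lemma apply6_transv: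
  "apply6 (transv v1 v2) x = x + symp x (ivec v1, ivec v2) *\<^sub>R (ivec v1, ivec v2)"
  by (simp add: apply6_def transv_def prod_eq_iff vec_eq_iff forall_3 matrix_vector_mult_def
      sum_3 rmat_def outer_def mat_def symp_def inner_vec_def ivec_def algebra_simps)


lemma symp_add_left: "symp (x + y) z = symp x z + symp y z"
  by (simp add: symp_def inner_add_left)
lemma symp_add_right: "symp x (y + z) = symp x y + symp x z"
  by (simp add: symp_def inner_add_right)
lemma symp_scale_left: "symp (c *\<^sub>R x) z = c * symp x z"
  by (simp add: symp_def algebra_simps)
lemma symp_scale_right: "symp x (c *\<^sub>R z) = c * symp x z"
  by (simp add: symp_def algebra_simps)
lemma symp_swap: "symp y x = - symp x y"
  by (simp add: symp_def inner_commute)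
lemma symp_self: "symp x x = 0"
  by (simp add: symp_def inner_commute)

lemma symp_transv_gen: "symp (x + symp x V *\<^sub>R V) (y + symp y V *\<^sub>R V) = symp x y"
  by (simp add: symp_add_left symp_add_right symp_scale_left symp_scale_right symp_self
        symp_swap[of V x] symp_swap[of V y] algebra_simps)

lemma transv_Sp6: "transv v1 v2 \<in> Sp6"
  unfolding Sp6_def mem_Collect_eq apply6_transv by (intro allI symp_transv_gen)

lemma int_vec_ivec: "int_vec (ivec a, ivec b)"
  by (simp add: int_vec_def ivec_def)

lemma inner_ivec: "ivec a \<bullet> ivec b = of_int (\<Sum>i\<in>UNIV. a $ i * b $ i)"
  by (simp add: inner_vec_def ivec_def)

lemma transv_Gamma12:
  assumes "odd (\<Sum>i\<in>UNIV. v1 $ i * v2 $ i)"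
  shows "transv v1 v2 \<in> Gamma12"
proof -
  let ?V = "(ivec v1, ivec v2)"
  have "(fst (apply6 (transv v1 v2) x) \<bullet> snd (apply6 (transv v1 v2) x) - fst x \<bullet> snd x) / 2 \<in> \<int>"
    if x: "int_vec x" for x
  proof -
    define t where "t = symp x ?V"
    define s where "s = snd x \<bullet> ivec v1"
    have "t \<in> \<int>" unfolding t_def by (rule symp_Ints[OF x int_vec_ivec])
    then obtain T where T: "t = of_int T" by (auto elim: Ints_cases)
    have "s \<in> \<int>" unfolding s_def using x by (auto simp: int_vec_def ivec_def intro!: inner_Ints)
    then obtain S where Sx: "s = of_int S" by (auto elim: Ints_cases)
    obtain m where m: "(\<Sum>i\<in>UNIV. v1 $ i * v2 $ i) = 2 * m + 1" using assms oddE by blast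
    have q: "ivec v1 \<bullet> ivec v2 = 2 * of_int m + 1" unfolding inner_ivec m by simp
    have x12: "fst x \<bullet> ivec v2 = t + s" by (simp add: t_def s_def symp_def)
    have "fst (apply6 (transv v1 v2) x) \<bullet> snd (apply6 (transv v1 v2) x) - fst x \<bullet> snd x
        = t * (fst x \<bullet> ivec v2) + t * (ivec v1 \<bullet> snd x) + t * t * (ivec v1 \<bullet> ivec v2)"
      unfolding apply6_transv t_def[symmetric]
      by (simp add: inner_add_left inner_add_right algebra_simps)
    also have "\<dots> = 2 * of_int (T * T + T * S + T * T * m)"
      unfolding x12 q by (simp add: s_def[symmetric] inner_commute[of "ivec v1"] T Sx algebra_simps)
    finally have e: "fst (apply6 (transv v1 v2) x) \<bullet> snd (apply6 (transv v1 v2) x) - fst x \<bullet> snd x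
        = 2 * of_int (T * T + T * S + T * T * m)" .
    have "(fst (apply6 (transv v1 v2) x) \<bullet> snd (apply6 (transv v1 v2) x) - fst x \<bullet> snd x) / 2
        = of_int (T * T + T * S + T * T * m)"
      by (metis e nonzero_mult_div_cancel_left zero_neq_numeral)
    then show ?thesis by (metis Ints_of_int)
  qed
  then show ?thesis using transv_Sp6 unfolding Gamma12_def mem_Collect_eq by blast
qed

lemma mult6_Gamma12:
  assumes "g \<in> Gamma12" "h \<in> Gamma12"
  shows "mult6 g h \<in> Gamma12"
proof -
  have sg: "g \<in> Sp6" and sh: "h \<in> Sp6" using assms by (auto simp: Gamma12_def)
  have pg: "symp (apply6 g x) (apply6 g y) = symp x y" for x y
    using sg unfolding Sp6_def mem_Collect_eq by blast
  have ph: "symp (apply6 h x) (apply6 h y) = symp x y" for x y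
    using sh unfolding Sp6_def mem_Collect_eq by blast
  have "mult6 g h \<in> Sp6"
    unfolding Sp6_def mem_Collect_eq apply6_mult6 pg ph by blast
  moreover have "(fst (apply6 (mult6 g h) x) \<bullet> snd (apply6 (mult6 g h) x) - fst x \<bullet> snd x) / 2 \<in> \<int>"
    if x: "int_vec x" for x
  proof -
    have a: "(fst (apply6 g (apply6 h x)) \<bullet> snd (apply6 g (apply6 h x)) - fst (apply6 h x) \<bullet> snd (apply6 h x)) / 2 \<in> \<int>"
      using assms(1) int_vec_apply6[OF x] unfolding Gamma12_def mem_Collect_eq by blast
    have b: "(fst (apply6 h x) \<bullet> snd (apply6 h x) - fst x \<bullet> snd x) / 2 \<in> \<int>"
      using assms(2) x unfolding Gamma12_def mem_Collect_eq by blast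
    have eq: "(P - Q) / 2 + (Q - R) / 2 = (P - R) / (2::real)" for P Q R by (simp add: field_simps)
    from Ints_add[OF a b] show ?thesis unfolding apply6_mult6 eq .
  qed
  ultimately show ?thesis unfolding Gamma12_def mem_Collect_eq by blast
qed

definition iB :: "(int^3) \<times> (int^3) \<Rightarrow> (int^3) \<times> (int^3) \<Rightarrow> int" where
  "iB p q = (\<Sum>i\<in>UNIV. fst p $ i * snd q $ i - snd p $ i * fst q $ i)"
definition iQ :: "int^3 \<Rightarrow> int^3 \<Rightarrow> int" where
  "iQ u v = (\<Sum>i\<in>UNIV. u $ i * v $ i)"
definition ivec6 :: "(int^3) \<times> (int^3) \<Rightarrow> vec6" where
  "ivec6 p = (ivec (fst p), ivec (snd p))"

lemma symp_ivec6: "symp (ivec6 p) (ivec6 q) = of_int (iB p q)"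
  by (simp add: symp_def ivec6_def inner_ivec iB_def sum_subtractf)

lemma ivec_add: "ivec (a + b) = ivec a + ivec b"
  by (simp add: ivec_def vec_eq_iff)

lemma transv_half:
  assumes "odd (iB p q)"
  shows "cong6 (apply6 (transv (fst p + fst q) (snd p + snd q)) ((1/2) *\<^sub>R ivec6 p)) ((1/2) *\<^sub>R ivec6 q)"
proof -
  obtain k where k: "iB p q = 2 * k + 1" using assms oddE by blast
  define P where "P = ivec6 p"
  define Q where "Q = ivec6 q"
  have V: "(ivec (fst p + fst q), ivec (snd p + snd q)) = P + Q"
    by (simp add: P_def Q_def ivec6_def ivec_add)
  have s: "symp ((1/2) *\<^sub>R P) (P + Q) = of_int k + 1/2"
    by (simp add: symp_scale_left symp_add_right symp_self P_def Q_def symp_ivec6 k)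
  have "apply6 (transv (fst p + fst q) (snd p + snd q)) ((1/2) *\<^sub>R P) - (1/2) *\<^sub>R Q
      = P + of_int k *\<^sub>R (P + Q)"
  proof -
    have h: "(1/2::real) *\<^sub>R P + (1/2) *\<^sub>R P = P"
      unfolding scaleR_add_left[symmetric] by simp
    show ?thesis unfolding apply6_transv V s by (simp add: algebra_simps h)
  qed
  moreover have "int_vec (P + of_int k *\<^sub>R (P + Q))"
    by (simp add: P_def Q_def ivec6_def int_vec_def ivec_def)
  ultimately show ?thesis by (simp add: cong6_iff P_def Q_def)
qed


definition candA :: "(int^3) \<times> (int^3)" where "candA = (vector [1, 1, 1], vector [1, 0, 1])"

lemma comb2:
  fixes e1 e2 e3 e4 e5 e6 :: int
  assumes "e1 \<in> {0, 1}" "e2 \<in> {0, 1}" "e3 \<in> {0, 1}" "e4 \<in> {0, 1}" "e5 \<in> {0, 1}" "e6 \<in> {0, 1}"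
    and "even (e1 * e4 + e2 * e5 + e3 * e6)"
    and "\<not> (e1 = 0 \<and> e2 = 0 \<and> e3 = 0 \<and> e4 = 0 \<and> e5 = 0 \<and> e6 = 0)"
  shows "\<exists>c \<in> {(vector [0, 0, 0], vector [0, 0, 1]), (vector [0, 0, 1], vector [0, 0, 0]),
                (vector [0, 1, 1], vector [0, 1, 1]), (vector [1, 0, 1], vector [1, 1, 1])}.
     odd (iB candA c) \<and> odd (iB c (vector [e1, e2, e3], vector [e4, e5, e6])) \<and>
     odd (iQ (fst candA + fst c) (snd candA + snd c)) \<and>
     odd (iQ (fst c + vector [e1, e2, e3]) (snd c + vector [e4, e5, e6]))"
  using assms
  by (simp add: iB_def iQ_def sum_3 candA_def) (elim disjE; simp)

lemma estar_shift:
  assumes "half_int_vec x" "int_vec m"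
  shows "estar (x + m) = estar x"
proof -
  obtain a b where x: "x = (a, b)" by (cases x) auto
  obtain m1 m2 where m: "m = (m1, m2)" by (cases m) auto
  have i1: "(2 *\<^sub>R a) \<bullet> m2 \<in> \<int>" using assms unfolding x m half_int_vec_def int_vec_def
    by (intro inner_Ints) auto
  have i2: "m1 \<bullet> (2 *\<^sub>R b) \<in> \<int>" using assms unfolding x m half_int_vec_def int_vec_def
    by (intro inner_Ints) auto
  have i3: "m1 \<bullet> m2 \<in> \<int>" using assms unfolding x m int_vec_def
    by (intro inner_Ints) auto
  obtain j where j: "(2 *\<^sub>R a) \<bullet> m2 + m1 \<bullet> (2 *\<^sub>R b) + 2 * (m1 \<bullet> m2) = of_int j"
    using Ints_add[OF Ints_add[OF i1 i2] Ints_mult[OF Ints_of_int[of 2] i3]] by (auto elim: Ints_cases)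
  have "4 * ((a + m1) \<bullet> (b + m2)) = 4 * (a \<bullet> b) + 2 * ((2 *\<^sub>R a) \<bullet> m2 + m1 \<bullet> (2 *\<^sub>R b) + 2 * (m1 \<bullet> m2))"
    by (simp add: inner_add_left inner_add_right algebra_simps)
  then have e: "4 * ((a + m1) \<bullet> (b + m2)) = 4 * (a \<bullet> b) + 2 * of_int j" unfolding j .
  have "estar (x + m) = exp (pi * \<i> * complex_of_real (4 * ((a + m1) \<bullet> (b + m2))))"
    by (simp add: estar_def x m algebra_simps)
  also have "\<dots> = exp (4 * pi * \<i> * complex_of_real (a \<bullet> b) + 2 * pi * \<i> * of_int j)"
    unfolding e by (simp add: algebra_simps)
  also have "\<dots> = estar x"
    by (simp add: exp_add estar_def x exp_eq_1)
  finally show ?thesis .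
qed

lemma estar_cong:
  assumes "half_int_vec x" "cong6 x y"
  shows "estar y = estar x"
proof -
  have "int_vec (y - x)" using assms(2) unfolding cong6_iff by (metis int_vec_minus minus_diff_eq)
  from estar_shift[OF assms(1) this] show ?thesis by simp
qed

lemma mod2_01: "(n::int) mod 2 \<in> {0, 1}"
  by auto

lemma bits:
  assumes "half_int_vec \<delta>"
  obtains e1 e2 :: "int^3" where "\<forall>i. e1 $ i \<in> {0, 1}" "\<forall>i. e2 $ i \<in> {0, 1}"
    "cong6 \<delta> ((1/2) *\<^sub>R ivec6 (e1, e2))"
proof -
  obtain a b where d: "\<delta> = (a, b)" by (cases \<delta>) auto
  define n1 where "n1 = (\<chi> i. \<lfloor>2 * a $ i\<rfloor>)"
  define n2 where "n2 = (\<chi> i. \<lfloor>2 * b $ i\<rfloor>)"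
  have n1: "of_int (n1 $ i) = 2 * a $ i" for i
    using assms unfolding d half_int_vec_def n1_def by (auto elim!: Ints_cases)
  have n2: "of_int (n2 $ i) = 2 * b $ i" for i
    using assms unfolding d half_int_vec_def n2_def by (auto elim!: Ints_cases)
  define e1 where "e1 = (\<chi> i. n1 $ i mod 2)"
  define e2 where "e2 = (\<chi> i. n2 $ i mod 2)"
  have c1: "a $ i - of_int (e1 $ i) / 2 = of_int (n1 $ i div 2)" for i
  proof -
    have "(of_int (n1 $ i) :: real) = of_int (2 * (n1 $ i div 2) + n1 $ i mod 2)" by simp
    also have "\<dots> = 2 * of_int (n1 $ i div 2) + of_int (n1 $ i mod 2)"
      by (simp only: of_int_add of_int_mult of_int_numeral)
    finally have "(of_int (n1 $ i) :: real) = 2 * of_int (n1 $ i div 2) + of_int (n1 $ i mod 2)" .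
    then show ?thesis using n1[of i] by (simp add: e1_def)
  qed
  have c2: "b $ i - of_int (e2 $ i) / 2 = of_int (n2 $ i div 2)" for i
  proof -
    have "(of_int (n2 $ i) :: real) = of_int (2 * (n2 $ i div 2) + n2 $ i mod 2)" by simp
    also have "\<dots> = 2 * of_int (n2 $ i div 2) + of_int (n2 $ i mod 2)"
      by (simp only: of_int_add of_int_mult of_int_numeral)
    finally have "(of_int (n2 $ i) :: real) = 2 * of_int (n2 $ i div 2) + of_int (n2 $ i mod 2)" .
    then show ?thesis using n2[of i] by (simp add: e2_def)
  qed
  show ?thesis
  proof (rule that[of e1 e2])
    show "\<forall>i. e1 $ i \<in> {0, 1}" "\<forall>i. e2 $ i \<in> {0, 1}"
      unfolding e1_def e2_def using mod2_01 by auto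
    have f1: "(fst \<delta> - fst ((1/2) *\<^sub>R ivec6 (e1, e2))) $ i = a $ i - of_int (e1 $ i) / 2" for i
      by (simp add: d ivec6_def ivec_def)
    have f2: "(snd \<delta> - snd ((1/2) *\<^sub>R ivec6 (e1, e2))) $ i = b $ i - of_int (e2 $ i) / 2" for i
      by (simp add: d ivec6_def ivec_def)
    show "cong6 \<delta> ((1/2) *\<^sub>R ivec6 (e1, e2))"
      unfolding cong6_def int_vec_def fst_conv snd_conv f1 f2 c1 c2 by simp
  qed
qed


lemma vec3_expand: "(v::int^3) = vector [v $ 1, v $ 2, v $ 3]"
  by (simp add: vec_eq_iff forall_3)

lemma exists_gamma:
  assumes hd: "half_int_vec \<delta>" and ed: "even_char \<delta>" and nz: "\<not> cong6 \<delta> (0, 0)"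
  shows "\<exists>\<gamma>\<in>Gamma12. cong6 (apply6 \<gamma> (v3 (1/2) (1/2) (1/2), v3 (1/2) 0 (1/2))) \<delta>"
proof -
  obtain e1 e2 :: "int^3" where b1: "\<forall>i. e1 $ i \<in> {0, 1}" and b2: "\<forall>i. e2 $ i \<in> {0, 1}"
    and cd: "cong6 \<delta> ((1/2) *\<^sub>R ivec6 (e1, e2))"
    using bits[OF hd] by blast
  define d where "d = (e1, e2)"
  have "estar ((1/2) *\<^sub>R ivec6 d) = estar \<delta>"
    using estar_cong[OF hd cd] d_def by simp
  also have "\<dots> = 1" using ed by (simp add: even_char_def)
  finally have es1: "estar ((1/2) *\<^sub>R ivec6 d) = 1" .
  have "estar ((1/2) *\<^sub>R ivec6 d) = exp (pi * \<i> * of_int (iQ e1 e2))"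
    by (simp add: estar_def d_def ivec6_def inner_ivec iQ_def algebra_simps)
  then have evQ: "even (iQ e1 e2)" using es1 exp_pi_int[of "iQ e1 e2"] by (auto split: if_splits)
  have nz2: "\<not> (e1 $ 1 = 0 \<and> e1 $ 2 = 0 \<and> e1 $ 3 = 0 \<and> e2 $ 1 = 0 \<and> e2 $ 2 = 0 \<and> e2 $ 3 = 0)"
  proof
    assume "e1 $ 1 = 0 \<and> e1 $ 2 = 0 \<and> e1 $ 3 = 0 \<and> e2 $ 1 = 0 \<and> e2 $ 2 = 0 \<and> e2 $ 3 = 0"
    then have "e1 = 0" "e2 = 0" by (simp_all add: vec_eq_iff forall_3)
    then have "(1/2) *\<^sub>R ivec6 (e1, e2) = (0, 0)" by (simp add: ivec6_def ivec_def vec_eq_iff)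
    then show False using cd nz by simp
  qed
  have evQ': "even (e1 $ 1 * e2 $ 1 + e1 $ 2 * e2 $ 2 + e1 $ 3 * e2 $ 3)"
    using evQ by (simp add: iQ_def sum_3)
  from comb2[of "e1 $ 1" "e1 $ 2" "e1 $ 3" "e2 $ 1" "e2 $ 2" "e2 $ 3", OF _ _ _ _ _ _ evQ' nz2]
  obtain c where c: "odd (iB candA c)" "odd (iB c d)"
      "odd (iQ (fst candA + fst c) (snd candA + snd c))" "odd (iQ (fst c + fst d) (snd c + snd d))"
    using b1 b2 unfolding d_def fst_conv snd_conv vec3_expand[of e1, symmetric] vec3_expand[of e2, symmetric]
    by blast
  define T1 where "T1 = transv (fst candA + fst c) (snd candA + snd c)"
  define T2 where "T2 = transv (fst c + fst d) (snd c + snd d)"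
  have g1: "T1 \<in> Gamma12" unfolding T1_def by (rule transv_Gamma12) (use c(3) in \<open>simp add: iQ_def\<close>)
  have g2: "T2 \<in> Gamma12" unfolding T2_def by (rule transv_Gamma12) (use c(4) in \<open>simp add: iQ_def\<close>)
  have c0: "(v3 (1/2) (1/2) (1/2), v3 (1/2) 0 (1/2)) = (1/2) *\<^sub>R ivec6 candA"
    by (simp add: candA_def ivec6_def ivec_def prod_eq_iff vec_eq_iff forall_3)
  have s1: "cong6 (apply6 T1 ((1/2) *\<^sub>R ivec6 candA)) ((1/2) *\<^sub>R ivec6 c)"
    unfolding T1_def by (rule transv_half[OF c(1)])
  have s2: "cong6 (apply6 T2 ((1/2) *\<^sub>R ivec6 c)) ((1/2) *\<^sub>R ivec6 d)"
    unfolding T2_def by (rule transv_half[OF c(2)])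
  have "cong6 (apply6 (mult6 T2 T1) (v3 (1/2) (1/2) (1/2), v3 (1/2) 0 (1/2))) \<delta>"
    unfolding apply6_mult6 c0
    using cong6_trans[OF cong6_trans[OF cong6_apply[OF s1] s2] cong6_sym[OF cd[folded d_def]]] .
  moreover have "mult6 T2 T1 \<in> Gamma12" by (rule mult6_Gamma12[OF g2 g1])
  ultimately show ?thesis by blast
qed

theorem proposition5p6:
  fixes Z :: "complex^3^3" and \<delta> :: vec6
  assumes "siegel3 Z"
    and "hyperelliptic_period_matrix Z"
    and "simple_jacobian Z"
    and "half_int_vec \<delta>" and "even_char \<delta>" and "theta \<delta> Z = 0"
    and "\<forall>\<xi>. half_int_vec \<xi> \<and> even_char \<xi> \<and> theta \<xi> Z = 0 \<longrightarrow> cong6 \<xi> \<delta>"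
    and "\<not> cong6 \<delta> (0, 0)"
  shows "(\<exists>\<gamma>\<in>Gamma12. vanishing_criterion Z (act \<gamma> eta_tilde)) \<and>
         (\<forall>\<gamma>\<in>Gamma12. cong6 (apply6 \<gamma> (v3 (1/2) (1/2) (1/2), v3 (1/2) 0 (1/2))) \<delta> \<longrightarrow>
              vanishing_criterion Z (act \<gamma> eta_tilde))"
proof -
  have Zs: "transpose Z = Z" using assms(1) by (simp add: siegel3_def)
  have all: "\<forall>\<gamma>\<in>Gamma12. cong6 (apply6 \<gamma> (v3 (1/2) (1/2) (1/2), v3 (1/2) 0 (1/2))) \<delta> \<longrightarrow>
              vanishing_criterion Z (act \<gamma> eta_tilde)"
  proof (intro ballI impI)
    fix \<gamma> assume g: "\<gamma> \<in> Gamma12" and gd: "cong6 (apply6 \<gamma> (v3 (1/2) (1/2) (1/2), v3 (1/2) 0 (1/2))) \<delta>"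
    show "vanishing_criterion Z (act \<gamma> eta_tilde)"
      unfolding vanishing_criterion_def
    proof (intro allI impI)
      fix S assume "S \<subseteq> Bset \<and> even (card S)"
      then show "theta (act \<gamma> eta_tilde S) Z = 0 \<longleftrightarrow> card (symdiff S (U_eta (act \<gamma> eta_tilde))) \<noteq> 4"
        using main_S[OF Zs g assms(6) assms(7) gd] by blast
    qed
  qed
  moreover obtain \<gamma> where "\<gamma> \<in> Gamma12" "cong6 (apply6 \<gamma> (v3 (1/2) (1/2) (1/2), v3 (1/2) 0 (1/2))) \<delta>"
    using exists_gamma[OF assms(4) assms(5) assms(8)] by blast
  ultimately show ?thesis by blast
qed

end
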